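(* Let $X$ and $\tilde X$ be entrywise nonnegative real symmetric matrices such that $I\succeq X$, $I\succeq\tilde X$, and $I-\tilde X\approx_\epsilon I-\tfrac12X-\tfrac12X^2$. If $\rho(X)\le 1-\lambda$, then all eigenvalues of $\tilde X$ lie between $1-\tfrac12(3-\lambda)e^{\epsilon}$ and $1-\tfrac12(3\lambda-\lambda^2)e^{-\epsilon}$.
   Context: $\rho$ denotes spectral radius; $\succeq$ is the Loewner order; $A\approx_\epsilon B$ means $e^{\epsilon}A\succeq B\succeq e^{-\epsilon}A$. *)

theory Defs
  imports "HOL-Analysis.Analysis"
begin

definition loewner_ge :: "real^'n^'n \<Rightarrow> real^'n^'n \<Rightarrow> bool" where
  "loewner_ge A B \<longleftrightarrow> (\<forall>x::real^'n. 0 \<le> x \<bullet> ((A - B) *v x))"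

definition spectral_approx :: "real \<Rightarrow> real^'n^'n \<Rightarrow> real^'n^'n \<Rightarrow> bool" where
  "spectral_approx eps A B \<longleftrightarrow> loewner_ge (exp eps *\<^sub>R A) B \<and> loewner_ge B (exp (- eps) *\<^sub>R A)"

definition cspec :: "real^'n^'n \<Rightarrow> complex set" where
  "cspec X = {\<mu>. \<exists>v::complex^'n. v \<noteq> 0 \<and>
      (\<chi> i j. complex_of_real (X $ i $ j)) *v v = \<mu> *s v}"

definition spec_rad :: "real^'n^'n \<Rightarrow> real" where
  "spec_rad X = Sup (cmod ` cspec X)"

definition nonneg_mat :: "real^'n^'n \<Rightarrow> bool" where
  "nonneg_mat X \<longleftrightarrow> (\<forall>i j. 0 \<le> X $ i $ j)"

definition symmetric_mat :: "real^'n^'n \<Rightarrow> bool" where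
  "symmetric_mat X \<longleftrightarrow> transpose X = X"

end

theory Submission
  imports Defs
begin

lemma sym_inner:
  fixes X :: "real^'n^'n"
  assumes "transpose X = X"
  shows "x \<bullet> (X *v y) = (X *v x) \<bullet> y"
proof -
  have "x \<bullet> (X *v y) = (x v* X) \<bullet> y" by (simp add: dot_lmul_matrix)
  also have "x v* X = X *v x" by (metis assms transpose_matrix_vector)
  finally show ?thesis .
qed


lemma quad_nonneg_zero:
  fixes a b :: real
  assumes "a \<ge> 0" "\<And>t. 0 \<le> a * t^2 + 2 * b * t"
  shows "b = 0"
proof (rule ccontr)
  assume nb: "b \<noteq> 0"
  define s where "s = 1 / (a+1)"
  have sp: "s > 0" using assms(1) unfolding s_def by simp
  have as: "a * s = 1 - s" using assms(1) unfolding s_def by (simp add: field_simps)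
  have "0 \<le> a * (-b * s)^2 + 2 * b * (-b * s)" by (rule assms(2))
  also have "a * (-b * s)^2 + 2 * b * (-b * s) = (b^2 * s) * (a * s - 2)"
    unfolding power2_eq_square by (simp add: algebra_simps)
  also have "\<dots> = (b^2 * s) * (-1 - s)" using as by simp
  finally have h: "0 \<le> (b^2 * s) * (-1 - s)" .
  have "b^2 * s > 0" using nb sp by simp
  moreover have "-1 - s < 0" using sp by simp
  ultimately have "(b^2 * s) * (-1 - s) < 0" by (rule mult_pos_neg)
  with h show False by linarith
qed


lemma psd_null:
  fixes P :: "real^'n^'n"
  assumes sym: "transpose P = P" and psd: "\<And>x. 0 \<le> x \<bullet> (P *v x)"
    and z: "u \<bullet> (P *v u) = 0"
  shows "P *v u = 0"
proof -
  have "\<And>y. y \<bullet> (P *v u) = 0"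
  proof -
    fix y
    have "\<And>t. 0 \<le> (y \<bullet> (P *v y)) * t^2 + 2 * (y \<bullet> (P *v u)) * t"
    proof -
      fix t :: real
      have e1: "P *v (u + t *\<^sub>R y) = P *v u + t *\<^sub>R (P *v y)"
        by (simp add: matrix_vector_right_distrib matrix_vector_mult_scaleR)
      have e2: "(u + t *\<^sub>R y) \<bullet> (P *v u + t *\<^sub>R (P *v y)) = u \<bullet> (P *v u) + t * (u \<bullet> (P *v y)) + t * (y \<bullet> (P *v u)) + t^2 * (y \<bullet> (P *v y))"
        by (simp add: inner_add_left inner_add_right power2_eq_square distrib_left)
      have e3: "u \<bullet> (P *v y) = y \<bullet> (P *v u)"
        using sym_inner[OF sym, of u y] by (simp add: inner_commute)
      have "0 \<le> u \<bullet> (P *v u) + t * (u \<bullet> (P *v y)) + t * (y \<bullet> (P *v u)) + t^2 * (y \<bullet> (P *v y))"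
        using psd[of "u + t *\<^sub>R y"] unfolding e1 e2 .
      then show "0 \<le> (y \<bullet> (P *v y)) * t^2 + 2 * (y \<bullet> (P *v u)) * t"
        unfolding e3 z by (simp add: mult.commute mult.left_commute)
    qed
    thus "y \<bullet> (P *v u) = 0" using quad_nonneg_zero psd by blast
  qed
  from this[of "P *v u"] show ?thesis by simp
qed



definition cmat :: "real^'n^'n \<Rightarrow> complex^'n^'n" where
  "cmat X = (\<chi> i j. complex_of_real (X $ i $ j))"

lemma cspec_bdd:
  fixes X :: "real^'n^'n"
  shows "bdd_above (cmod ` cspec X)"
proof -
  define K where "K = (\<Sum>i\<in>UNIV. \<Sum>j\<in>UNIV. \<bar>X $ i $ j\<bar>)"
  have "\<forall>\<mu>\<in>cspec X. cmod \<mu> \<le> K"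
  proof
    fix \<mu> assume "\<mu> \<in> cspec X"
    then obtain v :: "complex^'n" where v0: "v \<noteq> 0" and ev: "cmat X *v v = \<mu> *s v"
      unfolding cspec_def cmat_def by blast
    define m where "m = Max (range (\<lambda>j. cmod (v $ j)))"
    have "m \<in> range (\<lambda>j. cmod (v $ j))" unfolding m_def by (rule Max_in) auto
    then obtain i where mi: "cmod (v $ i) = m" by auto
    have mge: "\<And>j. cmod (v $ j) \<le> m" unfolding m_def by (rule Max_ge) auto
    have "m > 0"
    proof (rule ccontr)
      assume "\<not> m > 0"
      then have "\<And>j. v $ j = 0" using mge by (metis norm_le_zero_iff order_trans not_less)
      then have "v = 0" by (simp add: vec_eq_iff)
      with v0 show False by simp
    qed
    have "\<mu> * v $ i = (cmat X *v v) $ i" using ev by simp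
    also have "\<dots> = (\<Sum>j\<in>UNIV. complex_of_real (X $ i $ j) * v $ j)"
      by (simp add: matrix_vector_mult_def cmat_def)
    finally have "cmod \<mu> * m = cmod (\<Sum>j\<in>UNIV. complex_of_real (X $ i $ j) * v $ j)"
      using mi by (metis norm_mult)
    also have "\<dots> \<le> (\<Sum>j\<in>UNIV. cmod (complex_of_real (X $ i $ j) * v $ j))"
      by (rule norm_sum)
    also have "\<dots> \<le> (\<Sum>j\<in>UNIV. \<bar>X $ i $ j\<bar> * m)"
      by (rule sum_mono) (simp add: norm_mult mge mult_left_mono)
    also have "\<dots> = (\<Sum>j\<in>UNIV. \<bar>X $ i $ j\<bar>) * m" by (simp add: sum_distrib_right)
    finally have "cmod \<mu> \<le> (\<Sum>j\<in>UNIV. \<bar>X $ i $ j\<bar>)" using \<open>m > 0\<close> by simp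
    also have "\<dots> \<le> K" unfolding K_def
      by (rule member_le_sum) (auto intro: sum_nonneg)
    finally show "cmod \<mu> \<le> K" .
  qed
  thus ?thesis by (auto simp: bdd_above_def)
qed

lemma real_eig_in_cspec:
  fixes X :: "real^'n^'n"
  assumes "z \<noteq> 0" "X *v z = e *\<^sub>R z"
  shows "complex_of_real e \<in> cspec X"
proof -
  define v :: "complex^'n" where "v = (\<chi> i. complex_of_real (z $ i))"
  have "v \<noteq> 0" using assms(1) by (auto simp: v_def vec_eq_iff)
  moreover have "(\<chi> i j. complex_of_real (X $ i $ j)) *v v = complex_of_real e *s v"
  proof -
    have "\<And>i. (\<Sum>j\<in>UNIV. complex_of_real (X $ i $ j) * complex_of_real (z $ j))
         = complex_of_real e * complex_of_real (z $ i)"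
    proof -
      fix i
      have "(\<Sum>j\<in>UNIV. complex_of_real (X $ i $ j) * complex_of_real (z $ j))
         = complex_of_real ((X *v z) $ i)"
        by (simp add: matrix_vector_mult_def)
      also have "\<dots> = complex_of_real e * complex_of_real (z $ i)" using assms(2) by simp
      finally show "?thesis i" .
    qed
    then show ?thesis
      by (simp add: vec_eq_iff matrix_vector_mult_def v_def)
  qed
  ultimately show ?thesis unfolding cspec_def by blast
qed




lemma transpose_diff': "transpose (A - B) = transpose A - transpose (B::'a::ab_group_add^'n^'m)"
  by (simp add: transpose_def vec_eq_iff)

lemma opbound:
  fixes X :: "real^'n^'n"
  assumes sym: "transpose X = X" and rho: "spec_rad X \<le> r"
  shows "norm (X *v u) \<le> r * norm u"
proof -
  define q where "q = (\<lambda>u::real^'n. (X *v u) \<bullet> (X *v u))"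
  have cont: "continuous_on (sphere 0 1) q"
    unfolding q_def by (intro continuous_intros linear_continuous_on bounded_linear_inner_left) (auto intro: matrix_vector_mul_bounded_linear)
  have "sphere (0::real^'n) 1 \<noteq> {}" by simp
  then obtain u0 where u0: "u0 \<in> sphere 0 1" and mx: "\<And>y. y \<in> sphere 0 1 \<Longrightarrow> q y \<le> q u0"
    using continuous_attains_sup[OF compact_sphere _ cont] by blast
  define M where "M = q u0"
  have qs: "q (c *\<^sub>R x) = c^2 * q x" for c x
    by (simp add: q_def matrix_vector_mult_scaleR power2_eq_square)
  have qle: "q x \<le> M * (x \<bullet> x)" for x
  proof (cases "x = 0")
    case True then show ?thesis by (simp add: q_def)
  next
    case False
    then have np: "norm x > 0" by simp
    have "(1 / norm x) *\<^sub>R x \<in> sphere 0 1" using np by simp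
    then have "q ((1 / norm x) *\<^sub>R x) \<le> M" using mx unfolding M_def by blast
    then have "(1/norm x)^2 * q x \<le> M" by (simp add: qs)
    then have "q x \<le> M * (norm x)^2" using np by (simp add: field_simps)
    then show ?thesis by (simp add: power2_norm_eq_inner)
  qed
  have M0: "M \<ge> 0" unfolding M_def q_def by simp
  have u01: "u0 \<bullet> u0 = 1" using u0 by (simp add: inner_commute dot_square_norm)
  define P where "P = M *\<^sub>R mat 1 - X ** X"
  have qS: "x \<bullet> ((X ** X) *v x) = q x" for x
    unfolding q_def by (simp add: matrix_vector_mul_assoc[symmetric] sym_inner[OF sym])
  have Px: "x \<bullet> (P *v x) = M * (x \<bullet> x) - q x" for x
    unfolding P_def by (simp add: matrix_vector_mult_diff_rdistrib inner_diff_right qS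
       scaleR_matrix_vector_assoc[symmetric])
  have Psym: "transpose P = P"
    unfolding P_def by (simp add: transpose_diff' matrix_transpose_mul sym transpose_scalar)
  have "P *v u0 = 0"
    by (rule psd_null[OF Psym]) (use qle Px u01 M_def in auto)
  then have XX: "X *v (X *v u0) = M *\<^sub>R u0"
    unfolding P_def by (simp add: matrix_vector_mult_diff_rdistrib matrix_vector_mul_assoc
       scaleR_matrix_vector_assoc[symmetric])
  define s where "s = sqrt M"
  have s0: "s \<ge> 0" and ss: "s * s = M" using M0 by (auto simp: s_def)
  have "\<exists>e z. z \<noteq> 0 \<and> X *v z = e *\<^sub>R z \<and> \<bar>e\<bar> = s"
  proof (cases "X *v u0 + s *\<^sub>R u0 = 0")
    case True
    then have "X *v u0 = (-s) *\<^sub>R u0" by (simp add: eq_neg_iff_add_eq_0)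
    moreover have "u0 \<noteq> 0" using u0 by auto
    ultimately show ?thesis using s0 by (intro exI[of _ "-s"] exI[of _ u0]) auto
  next
    case False
    have "X *v (X *v u0 + s *\<^sub>R u0) = M *\<^sub>R u0 + s *\<^sub>R (X *v u0)"
      by (simp add: matrix_vector_right_distrib matrix_vector_mult_scaleR XX)
    also have "\<dots> = s *\<^sub>R (X *v u0 + s *\<^sub>R u0)"
      by (simp add: scaleR_add_right ss[symmetric])
    finally show ?thesis using False s0 by (intro exI[of _ s] exI[of _ "X *v u0 + s *\<^sub>R u0"]) auto
  qed
  then obtain e z where "z \<noteq> 0" "X *v z = e *\<^sub>R z" "\<bar>e\<bar> = s" by blast
  then have "complex_of_real e \<in> cspec X" by (intro real_eig_in_cspec)
  then have "cmod (complex_of_real e) \<le> spec_rad X"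
    unfolding spec_rad_def by (intro cSup_upper cspec_bdd imageI)
  then have sr: "s \<le> r" using rho \<open>\<bar>e\<bar> = s\<close> by simp
  have "(norm (X *v u))^2 = q u" by (simp add: q_def power2_norm_eq_inner)
  also have "\<dots> \<le> M * (u \<bullet> u)" by (rule qle)
  also have "\<dots> = (s * norm u)^2" by (simp add: ss[symmetric] power2_eq_square power2_norm_eq_inner[symmetric])
  also have "\<dots> \<le> (r * norm u)^2"
    using s0 sr by (intro power_mono mult_right_mono) auto
  finally show ?thesis
    by (rule power2_le_imp_le) (use s0 sr in auto)
qed




lemma loewner_quad:
  fixes P Q :: "real^'n^'n"
  assumes "loewner_ge P Q" shows "u \<bullet> (Q *v u) \<le> u \<bullet> (P *v u)"
  using assms unfolding loewner_ge_def
  by (metis diff_ge_0_iff_ge inner_diff_right matrix_vector_mult_diff_rdistrib)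

lemma quad_scale:
  fixes A :: "real^'n^'n"
  shows "u \<bullet> ((c *\<^sub>R A) *v u) = c * (u \<bullet> (A *v u))"
  by (simp add: scaleR_matrix_vector_assoc[symmetric])

lemma eig_bounds:
  fixes X Xt :: "real^'n^'n" and eps lam m :: real
  assumes symX: "transpose X = X"
    and appr: "spectral_approx eps (mat 1 - (1/2) *\<^sub>R X - (1/2) *\<^sub>R (X ** X)) (mat 1 - Xt)"
    and rho: "spec_rad X \<le> 1 - lam"
    and u0: "u \<noteq> 0" and ev: "Xt *v u = m *\<^sub>R u"
  shows "1 - (1/2) * (3 - lam) * exp eps \<le> m \<and> m \<le> 1 - (1/2) * (3 * lam - lam^2) * exp (- eps)"
proof -
  define A where "A = mat 1 - (1/2) *\<^sub>R X - (1/2) *\<^sub>R (X ** X)"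
  define B :: "real^'n^'n" where "B = mat 1 - Xt"
  define r where "r = 1 - lam"
  define N where "N = u \<bullet> u"
  have Np: "N > 0" using u0 by (simp add: N_def)
  have nN: "(norm u)^2 = N" by (simp add: N_def power2_norm_eq_inner)
  have ob: "norm (X *v u) \<le> r * norm u" using opbound[OF symX] rho r_def by simp
  have r0: "r \<ge> 0"
  proof -
    have "0 \<le> r * norm u" using ob norm_ge_zero order_trans by blast
    with u0 show ?thesis by (simp add: zero_le_mult_iff)
  qed
  have c1: "\<bar>u \<bullet> (X *v u)\<bar> \<le> r * N"
  proof -
    have "\<bar>u \<bullet> (X *v u)\<bar> \<le> norm u * norm (X *v u)" by (rule Cauchy_Schwarz_ineq2)
    also have "\<dots> \<le> norm u * (r * norm u)" by (rule mult_left_mono[OF ob]) simp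
    also have "\<dots> = r * N" using nN by (simp add: power2_eq_square)
    finally show ?thesis .
  qed
  have c2: "(X *v u) \<bullet> (X *v u) \<le> r^2 * N"
  proof -
    have "(X *v u) \<bullet> (X *v u) = (norm (X *v u))^2" by (simp add: power2_norm_eq_inner)
    also have "\<dots> \<le> (r * norm u)^2" by (rule power_mono[OF ob]) simp
    also have "\<dots> = r^2 * N" using nN by (simp add: power_mult_distrib)
    finally show ?thesis .
  qed
  have c3: "(X *v u) \<bullet> (X *v u) \<ge> 0" by simp
  have uA: "u \<bullet> (A *v u) = N - (1/2) * (u \<bullet> (X *v u)) - (1/2) * ((X *v u) \<bullet> (X *v u))"
    unfolding A_def N_def
    by (simp add: matrix_vector_mult_diff_rdistrib inner_diff_right quad_scale
        scaleR_matrix_vector_assoc[symmetric] matrix_vector_mul_assoc[symmetric] sym_inner[OF symX])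
  have uB: "u \<bullet> (B *v u) = (1 - m) * N"
    unfolding B_def N_def by (simp add: matrix_vector_mult_diff_rdistrib inner_diff_right ev algebra_simps)
  have Aup: "u \<bullet> (A *v u) \<le> ((3 - lam)/2) * N"
  proof -
    have e: "((3 - lam)/2) * N = N + (1/2) * (r * N)" by (simp add: r_def field_simps)
    have "- (u \<bullet> (X *v u)) \<le> r * N" using c1 by (simp add: abs_le_iff)
    then show ?thesis unfolding e using uA c3 by linarith
  qed
  have Alo: "u \<bullet> (A *v u) \<ge> ((3 * lam - lam^2)/2) * N"
  proof -
    have "((3 * lam - lam^2)/2) * N = N - (1/2) * (r * N) - (1/2) * (r^2 * N)"
      by (simp add: r_def power2_eq_square field_simps)
    also have "\<dots> \<le> u \<bullet> (A *v u)" using uA c1 c2 by (simp add: abs_le_iff)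
    finally show ?thesis .
  qed
  have L1: "u \<bullet> (B *v u) \<le> exp eps * (u \<bullet> (A *v u))"
    using loewner_quad[of "exp eps *\<^sub>R A" B u] appr unfolding spectral_approx_def A_def B_def
    by (simp add: quad_scale)
  have L2: "exp (- eps) * (u \<bullet> (A *v u)) \<le> u \<bullet> (B *v u)"
    using loewner_quad[of B "exp (- eps) *\<^sub>R A" u] appr unfolding spectral_approx_def A_def B_def
    by (simp add: quad_scale)
  have "(1 - m) * N \<le> ((1/2) * (3 - lam) * exp eps) * N"
  proof -
    have "(1 - m) * N \<le> exp eps * (u \<bullet> (A *v u))" using L1 uB by simp
    also have "\<dots> \<le> exp eps * (((3 - lam)/2) * N)" by (rule mult_left_mono[OF Aup]) simp
    finally show ?thesis by (simp add: algebra_simps)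
  qed
  then have g1: "1 - m \<le> (1/2) * (3 - lam) * exp eps" using Np by (simp add: mult_le_cancel_right_pos)
  have "((1/2) * (3 * lam - lam^2) * exp (- eps)) * N \<le> (1 - m) * N"
  proof -
    have ee: "((1/2) * (3 * lam - lam^2) * exp (- eps)) * N = exp (- eps) * (((3 * lam - lam^2)/2) * N)"
      by simp
    have "exp (- eps) * (((3 * lam - lam^2)/2) * N) \<le> exp (- eps) * (u \<bullet> (A *v u))"
      by (rule mult_left_mono[OF Alo]) simp
    also have "\<dots> \<le> (1 - m) * N" using L2 uB by simp
    finally show ?thesis unfolding ee .
  qed
  then have g2: "(1/2) * (3 * lam - lam^2) * exp (- eps) \<le> 1 - m" using Np by (simp add: mult_le_cancel_right_pos)
  show ?thesis using g1 g2 by linarith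
qed




theorem mainTheorem8:
  fixes X Xt :: "real^'n^'n" and eps lam :: real
  assumes "nonneg_mat X" and "nonneg_mat Xt"
    and "symmetric_mat X" and "symmetric_mat Xt"
    and "loewner_ge (mat 1) X" and "loewner_ge (mat 1) Xt"
    and "spectral_approx eps (mat 1 - (1/2) *\<^sub>R X - (1/2) *\<^sub>R (X ** X)) (mat 1 - Xt)"
    and "spec_rad X \<le> 1 - lam"
  shows "\<forall>\<mu> \<in> cspec Xt. \<mu> \<in> \<real> \<and>
           1 - (1/2) * (3 - lam) * exp eps \<le> Re \<mu> \<and>
           Re \<mu> \<le> 1 - (1/2) * (3 * lam - lam^2) * exp (- eps)"
proof
  fix \<mu> assume "\<mu> \<in> cspec Xt"
  then obtain v :: "complex^'n" where v0: "v \<noteq> 0"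
    and ev: "(\<chi> i j. complex_of_real (Xt $ i $ j)) *v v = \<mu> *s v"
    unfolding cspec_def by blast
  have symX: "transpose X = X" and symT: "transpose Xt = Xt"
    using assms(3,4) by (auto simp: symmetric_mat_def)
  define a :: "real^'n" where "a = (\<chi> i. Re (v $ i))"
  define b :: "real^'n" where "b = (\<chi> i. Im (v $ i))"
  have comp: "(\<Sum>j\<in>UNIV. complex_of_real (Xt $ i $ j) * v $ j) = \<mu> * v $ i" for i
    using ev by (simp add: vec_eq_iff matrix_vector_mult_def)
  have Ea: "Xt *v a = Re \<mu> *\<^sub>R a - Im \<mu> *\<^sub>R b"
  proof -
    have "(Xt *v a) $ i = (Re \<mu> *\<^sub>R a - Im \<mu> *\<^sub>R b) $ i" for i
    proof -
      have "Re (\<Sum>j\<in>UNIV. complex_of_real (Xt $ i $ j) * v $ j) = Re (\<mu> * v $ i)"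
        by (simp only: comp)
      then show ?thesis by (simp add: matrix_vector_mult_def a_def b_def Re_sum)
    qed
    then show ?thesis by (simp add: vec_eq_iff)
  qed
  have Eb: "Xt *v b = Re \<mu> *\<^sub>R b + Im \<mu> *\<^sub>R a"
  proof -
    have "(Xt *v b) $ i = (Re \<mu> *\<^sub>R b + Im \<mu> *\<^sub>R a) $ i" for i
    proof -
      have "Im (\<Sum>j\<in>UNIV. complex_of_real (Xt $ i $ j) * v $ j) = Im (\<mu> * v $ i)"
        by (simp only: comp)
      then show ?thesis by (simp add: matrix_vector_mult_def a_def b_def Im_sum algebra_simps)
    qed
    then show ?thesis by (simp add: vec_eq_iff)
  qed
  have ab0: "a \<noteq> 0 \<or> b \<noteq> 0"
  proof (rule ccontr)
    assume "\<not> (a \<noteq> 0 \<or> b \<noteq> 0)"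
    then have "\<And>i. Re (v $ i) = 0 \<and> Im (v $ i) = 0" by (auto simp: a_def b_def vec_eq_iff)
    then have "v = 0" by (simp add: vec_eq_iff complex_eq_iff)
    with v0 show False by simp
  qed
  have "a \<bullet> (Xt *v b) = (Xt *v a) \<bullet> b" by (rule sym_inner[OF symT])
  then have "Re \<mu> * (a \<bullet> b) + Im \<mu> * (a \<bullet> a) = Re \<mu> * (a \<bullet> b) - Im \<mu> * (b \<bullet> b)"
    unfolding Ea Eb by (simp add: inner_add_right inner_diff_left inner_diff_right inner_commute[of b a])
  then have "Im \<mu> * (a \<bullet> a + b \<bullet> b) = 0" by (simp add: algebra_simps)
  moreover have "a \<bullet> a + b \<bullet> b > 0" using ab0
    by (metis add_pos_nonneg add_nonneg_pos inner_gt_zero_iff inner_ge_zero)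
  ultimately have Im0: "Im \<mu> = 0" by simp
  have Ea': "Xt *v a = Re \<mu> *\<^sub>R a" and Eb': "Xt *v b = Re \<mu> *\<^sub>R b" using Ea Eb Im0 by auto
  have bnd: "1 - (1/2) * (3 - lam) * exp eps \<le> Re \<mu> \<and> Re \<mu> \<le> 1 - (1/2) * (3 * lam - lam^2) * exp (- eps)"
    using ab0 eig_bounds[OF symX assms(7) assms(8)] Ea' Eb' by blast
  show "\<mu> \<in> \<real> \<and> 1 - (1/2) * (3 - lam) * exp eps \<le> Re \<mu> \<and>
           Re \<mu> \<le> 1 - (1/2) * (3 * lam - lam^2) * exp (- eps)"
    using bnd Im0 by (simp add: complex_is_Real_iff)
qed


end
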